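(* Suppose A1–A3 hold and let $\{x_k\}$ be generated by Algorithm 1. If $\nu_k\to0$ as $k\to\infty$, then either there exists $\bar k$ with $\nabla f(x_{\bar k})=0$, or $\liminf_{k\to\infty}\|\nabla f(x_k)\|=0$. (More precisely, $\lim_{T\to\infty}\min_{k=0,\dots,T-1}\|\nabla f(x_k)\|=0$.)
   Context: Let $(X,\langle\cdot,\cdot\rangle)$ be a real Hilbert space with induced norm $\|\cdot\|$, and $f:X\to\mathbb{R}$ Fréchet differentiable with gradient $\nabla f$. Algorithm 1 (general non-monotone descent algorithm): parameters $x_0\in X$, $\alpha_0>0$, $\beta,\rho\in(0,1)$. For $k=0,1,2,\dots$: choose $d_k\in X$ with $\langle\nabla f(x_k),d_k\rangle<0$; then for $l=0,1,2,\dots$ choose a number $\nu_{k,l}\ge 0$ and test $$f(x_k+\alpha_k\beta^l d_k)\le f(x_k)+\rho\alpha_k\beta^l\langle\nabla f(x_k),d_k\rangle+\nu_{k,l};$$ let $l_k$ be the first $l$ for which this holds, set $\nu_k:=\nu_{k,l_k}$, $x_{k+1}=x_k+\alpha_k\beta^{l_k}d_k$ and $\alpha_{k+1}=\alpha_k\beta^{l_k-1}$. It is assumed the algorithm generates infinite sequences (all $l_k$ finite). Assumptions: A1: $\nabla f$ is Lipschitz continuous with constant $L>0$. A2: there is $f_{low}\in\mathbb{R}$ with $f(x)\ge f_{low}$ for all $x\in X$. A3: there are constants $c_1,c_2>0$ with $\langle\nabla f(x_k),d_k\rangle\le -c_1\|\nabla f(x_k)\|^2$ and $\|d_k\|\le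 c_2\|\nabla f(x_k)\|$ for all $k$. *)

theory Defs
  imports "HOL-Analysis.Analysis"
begin

end

theory Submission
  imports Defs
begin

lemma descent_ineq:
  fixes f :: "'a::real_inner \<Rightarrow> real" and g :: "'a \<Rightarrow> 'a"
  assumes grad: "\<And>y. (f has_derivative (\<lambda>h. inner (g y) h)) (at y)"
    and lip: "L-lipschitz_on UNIV g" and t: "t > 0"
  shows "f (y + t *\<^sub>R h) \<le> f y + t * inner (g y) h + L * t^2 * (norm h)^2"
proof -
  have D: "((\<lambda>s. f (y + s *\<^sub>R h)) has_real_derivative inner (g (y + s *\<^sub>R h)) h) (at s)" for s
  proof -
    have "((\<lambda>s. y + s *\<^sub>R h) has_derivative (\<lambda>s. s *\<^sub>R h)) (at s)"
      by (auto intro!: derivative_eq_intros)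
    from has_derivative_compose[OF this grad]
    have "((\<lambda>s. f (y + s *\<^sub>R h)) has_derivative (\<lambda>s'. inner (g (y + s *\<^sub>R h)) (s' *\<^sub>R h))) (at s)" .
    moreover have "(\<lambda>s'. inner (g (y + s *\<^sub>R h)) (s' *\<^sub>R h)) = (*) (inner (g (y + s *\<^sub>R h)) h)"
      by (auto simp: mult.commute)
    ultimately show ?thesis by (simp add: has_field_derivative_def)
  qed
  obtain z where z: "0 < z" "z < t" "f (y + t *\<^sub>R h) - f (y + 0 *\<^sub>R h) = (t - 0) * inner (g (y + z *\<^sub>R h)) h"
    using MVT2[of 0 t "\<lambda>s. f (y + s *\<^sub>R h)" "\<lambda>s. inner (g (y + s *\<^sub>R h)) h"] t D by blast
  have L0: "L \<ge> 0" using lip lipschitz_on_nonneg by blast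
  have "inner (g (y + z *\<^sub>R h)) h - inner (g y) h = inner (g (y + z *\<^sub>R h) - g y) h"
    by (simp add: inner_diff_left)
  also have "\<dots> \<le> norm (g (y + z *\<^sub>R h) - g y) * norm h" by (rule norm_cauchy_schwarz)
  also have "norm (g (y + z *\<^sub>R h) - g y) \<le> L * norm (z *\<^sub>R h)"
    using lipschitz_onD[OF lip, of "y + z *\<^sub>R h" y] by (simp add: dist_norm)
  hence "norm (g (y + z *\<^sub>R h) - g y) * norm h \<le> L * norm (z *\<^sub>R h) * norm h"
    by (simp add: mult_right_mono)
  also have "\<dots> = L * z * (norm h)^2" using z by (simp add: power2_eq_square)
  also have "\<dots> \<le> L * t * (norm h)^2" using z L0 by (intro mult_right_mono mult_left_mono) auto
  finally have "inner (g (y + z *\<^sub>R h)) h \<le> inner (g y) h + L * t * (norm h)^2" by simp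
  hence "t * inner (g (y + z *\<^sub>R h)) h \<le> t * (inner (g y) h + L * t * (norm h)^2)"
    using t by (simp add: mult_left_mono)
  thus ?thesis using z by (simp add: algebra_simps power2_eq_square)
qed


theorem theorem3:
  fixes f :: "'a::{real_inner, complete_space} \<Rightarrow> real"
    and g :: "'a \<Rightarrow> 'a"
    and x d :: "nat \<Rightarrow> 'a"
    and \<alpha> :: "nat \<Rightarrow> real"
    and \<nu> :: "nat \<Rightarrow> nat \<Rightarrow> real"
    and l :: "nat \<Rightarrow> nat"
    and x0 :: 'a and \<alpha>0 \<beta> \<rho> L f_low c1 c2 :: real
  assumes grad: "\<And>y. (f has_derivative (\<lambda>h. inner (g y) h)) (at y)"
    and params: "\<alpha>0 > 0" "0 < \<beta>" "\<beta> < 1" "0 < \<rho>" "\<rho> < 1"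
    and init: "x 0 = x0" "\<alpha> 0 = \<alpha>0"
    and descent: "\<And>k. inner (g (x k)) (d k) < 0"
    and nu_nonneg: "\<And>k j. \<nu> k j \<ge> 0"
    and accept: "\<And>k. f (x k + (\<alpha> k * \<beta> ^ l k) *\<^sub>R d k)
                   \<le> f (x k) + \<rho> * \<alpha> k * \<beta> ^ l k * inner (g (x k)) (d k) + \<nu> k (l k)"
    and first: "\<And>k j. j < l k \<Longrightarrow> \<not> (f (x k + (\<alpha> k * \<beta> ^ j) *\<^sub>R d k)
                   \<le> f (x k) + \<rho> * \<alpha> k * \<beta> ^ j * inner (g (x k)) (d k) + \<nu> k j)"
    and step: "\<And>k. x (Suc k) = x k + (\<alpha> k * \<beta> ^ l k) *\<^sub>R d k"
    and stepsize: "\<And>k. \<alpha> (Suc k) = \<alpha> k * \<beta> powi (int (l k) - 1)"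
    and A1: "L > 0" "L-lipschitz_on UNIV g"
    and A2: "\<And>y. f y \<ge> f_low"
    and A3: "c1 > 0" "c2 > 0"
      "\<And>k. inner (g (x k)) (d k) \<le> - c1 * (norm (g (x k)))\<^sup>2"
      "\<And>k. norm (d k) \<le> c2 * norm (g (x k))"
    and nu_lim: "(\<lambda>k. \<nu> k (l k)) \<longlonglongrightarrow> 0"
  shows "(\<exists>k. g (x k) = 0) \<or>
         (liminf (\<lambda>k. ereal (norm (g (x k)))) = 0 \<and>
          (\<lambda>T. Min ((\<lambda>k. norm (g (x k))) ` {..<T})) \<longlonglongrightarrow> 0)"
proof -
  define G where "G k = g (x k)" for k
  define t where "t k = \<alpha> k * \<beta> ^ l k" for k
  define tb where "tb = (1 - \<rho>) * c1 / (L * c2^2)"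
  define \<tau> where "\<tau> = min \<alpha>0 (\<beta> * tb)"
  have tb_pos: "tb > 0" using params A1 A3 by (simp add: tb_def)
  have \<tau>_pos: "\<tau> > 0" using params tb_pos by (simp add: \<tau>_def)
  have pw: "\<beta> powi (int n - 1) = \<beta> ^ n / \<beta>" for n
    using params by (simp add: power_int_diff power_int_of_nat)
  have apos: "\<alpha> k > 0" for k
  proof (induction k)
    case 0 then show ?case using init params by simp
  next
    case (Suc k) then show ?case using params by (simp add: stepsize pw)
  qed
  have tpos: "t k > 0" for k using apos params by (simp add: t_def)
  have anext: "\<alpha> (Suc k) = t k / \<beta>" for k by (simp add: stepsize pw t_def)
  have big: "t k > \<beta> * tb" if "l k > 0" for k
  proof -
    define j where "j = l k - 1"
    have j: "j < l k" "Suc j = l k" using that by (auto simp: j_def)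
    define s where "s = \<alpha> k * \<beta> ^ j"
    have spos: "s > 0" using apos params by (simp add: s_def)
    have fail: "\<not> f (x k + s *\<^sub>R d k) \<le> f (x k) + \<rho> * s * inner (G k) (d k) + \<nu> k j"
      using first[OF j(1)] by (simp add: s_def G_def mult.assoc)
    have "s > tb"
    proof (rule ccontr)
      assume "\<not> s > tb" hence le: "s \<le> tb" by simp
      have de: "f (x k + s *\<^sub>R d k) \<le> f (x k) + s * inner (G k) (d k) + L * s^2 * (norm (d k))^2"
        using descent_ineq[OF grad A1(2) spos] by (simp add: G_def)
      have n2: "(norm (d k))^2 \<le> c2^2 * (norm (G k))^2"
        using A3(4)[of k] by (simp add: G_def power_mult_distrib[symmetric] power_mono)
      have c1i: "inner (G k) (d k) \<le> - c1 * (norm (G k))^2" using A3(3) by (simp add: G_def)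
      have "L * s * (norm (d k))^2 \<le> L * tb * (c2^2 * (norm (G k))^2)"
        using A1 le spos n2 by (intro mult_mono) auto
      also have "\<dots> = (1 - \<rho>) * c1 * (norm (G k))^2" using A1 A3 by (simp add: tb_def)
      also have "\<dots> \<le> (1 - \<rho>) * (- inner (G k) (d k))" using params c1i
        by (simp only: mult.assoc, intro mult_left_mono) auto
      finally have key: "L * s * (norm (d k))^2 \<le> (1 - \<rho>) * (- inner (G k) (d k))" .
      hence "s * (L * s * (norm (d k))^2) \<le> s * ((1 - \<rho>) * (- inner (G k) (d k)))"
        using spos by (intro mult_left_mono) auto
      hence "s * inner (G k) (d k) + L * s^2 * (norm (d k))^2 \<le> \<rho> * s * inner (G k) (d k)"
        by (simp add: algebra_simps power2_eq_square)
      thus False using de fail nu_nonneg[of k j] by linarith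
    qed
    moreover have "t k = s * \<beta>"
    proof -
      have "\<beta> ^ l k = \<beta> ^ j * \<beta>" using j(2) power_Suc2 by metis
      thus ?thesis unfolding t_def s_def by simp
    qed
    ultimately show ?thesis using params by (simp add: mult.commute)
  qed
  have tlow: "t k \<ge> \<tau>" for k
  proof (induction k)
    case 0 show ?case
    proof (cases "l 0 = 0")
      case True thus ?thesis using init by (simp add: t_def \<tau>_def)
    next
      case False thus ?thesis using big[of 0] by (simp add: \<tau>_def)
    qed
  next
    case (Suc k) show ?case
    proof (cases "l (Suc k) = 0")
      case True
      hence "t (Suc k) = t k / \<beta>" by (simp add: t_def anext)
      moreover have "t k / \<beta> \<ge> t k" using tpos[of k] params by (simp add: divide_simps)
      ultimately show ?thesis using Suc by simp
    next
      case False thus ?thesis using big[of "Suc k"] by (simp add: \<tau>_def)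
    qed
  qed
  have dec: "f (x (Suc k)) \<le> f (x k) - \<rho> * \<tau> * c1 * (norm (G k))^2 + \<nu> k (l k)" for k
  proof -
    have c1i: "inner (G k) (d k) \<le> - c1 * (norm (G k))^2" using A3(3) by (simp add: G_def)
    have "\<rho> * \<tau> * (c1 * (norm (G k))^2) \<le> \<rho> * t k * (c1 * (norm (G k))^2)"
      using params tlow[of k] A3 by (intro mult_right_mono mult_left_mono) auto
    also have "\<dots> \<le> \<rho> * t k * (- inner (G k) (d k))"
      using params tpos[of k] c1i by (intro mult_left_mono) auto
    finally have "\<rho> * t k * inner (G k) (d k) \<le> - (\<rho> * \<tau> * c1 * (norm (G k))^2)"
      by (simp add: algebra_simps)
    moreover have "f (x (Suc k)) \<le> f (x k) + \<rho> * t k * inner (G k) (d k) + \<nu> k (l k)"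
      using accept[of k] by (simp add: step G_def t_def mult.assoc)
    ultimately show ?thesis by linarith
  qed
  have freq: "\<exists>k\<ge>K. norm (G k) < e" if e: "e > 0" for e K
  proof (rule ccontr)
    assume "\<not> ?thesis"
    hence ge: "\<And>k. k \<ge> K \<Longrightarrow> norm (G k) \<ge> e" by (simp add: not_less)
    define \<delta> where "\<delta> = \<rho> * \<tau> * c1 * e^2 / 2"
    have \<delta>: "\<delta> > 0" using params \<tau>_pos A3 e by (simp add: \<delta>_def)
    obtain K1 where K1': "\<forall>k\<ge>K1. norm (\<nu> k (l k) - 0) < \<delta>"
      using LIMSEQ_D[OF nu_lim \<delta>] by blast
    have K1: "\<nu> k (l k) < \<delta>" if "k \<ge> K1" for k
      using K1' that by (auto simp: abs_less_iff)
    define K2 where "K2 = max K K1"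
    have step2: "f (x (Suc k)) \<le> f (x k) - \<delta>" if "k \<ge> K2" for k
    proof -
      have "e^2 \<le> (norm (G k))^2" using ge[of k] e that by (simp add: K2_def power_mono)
      hence "\<rho> * \<tau> * c1 * e^2 \<le> \<rho> * \<tau> * c1 * (norm (G k))^2"
        using params \<tau>_pos A3 by (intro mult_left_mono) auto
      thus ?thesis using dec[of k] K1[of k] that by (simp add: K2_def \<delta>_def)
    qed
    have iter: "f (x (K2 + n)) \<le> f (x K2) - real n * \<delta>" for n
    proof (induction n)
      case 0 show ?case by simp
    next
      case (Suc n)
      have "f (x (K2 + Suc n)) \<le> f (x (K2 + n)) - \<delta>" using step2[of "K2 + n"] by simp
      thus ?case using Suc by (simp add: algebra_simps)
    qed
    obtain n where n: "real n > (f (x K2) - f_low) / \<delta>" using reals_Archimedean2 by blast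
    hence "real n * \<delta> > f (x K2) - f_low" using \<delta> by (simp add: divide_simps)
    thus False using iter[of n] A2[of "x (K2 + n)"] by linarith
  qed
  have nn: "\<And>k. norm (g (x k)) \<ge> 0" by simp
  have li: "liminf (\<lambda>k. ereal (norm (g (x k)))) = 0"
  proof (rule antisym)
    show "liminf (\<lambda>k. ereal (norm (g (x k)))) \<le> 0"
      unfolding liminf_SUP_INF
    proof (rule SUP_least)
      fix n
      show "(INF m\<in>{n..}. ereal (norm (g (x m)))) \<le> 0"
      proof (rule ereal_le_epsilon2)
        fix e :: real assume "e > 0"
        then obtain k where "k \<ge> n" "norm (G k) < e" using freq by blast
        hence "(INF m\<in>{n..}. ereal (norm (g (x m)))) \<le> ereal (norm (g (x k)))"
          by (intro INF_lower) auto
        also have "\<dots> \<le> 0 + ereal e" using \<open>norm (G k) < e\<close> by (simp add: G_def)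
        finally show "(INF m\<in>{n..}. ereal (norm (g (x m)))) \<le> 0 + ereal e" .
      qed
    qed
    show "0 \<le> liminf (\<lambda>k. ereal (norm (g (x k))))"
      unfolding liminf_SUP_INF
      by (rule order_trans[OF _ SUP_upper[of 0]]) (auto intro!: INF_greatest)
  qed
  have lm: "(\<lambda>T. Min ((\<lambda>k. norm (g (x k))) ` {..<T})) \<longlonglongrightarrow> 0"
  proof (rule metric_LIMSEQ_I)
    fix r :: real assume "r > 0"
    then obtain k where k: "norm (G k) < r" using freq[of r 0] by blast
    show "\<exists>no. \<forall>n\<ge>no. dist (Min ((\<lambda>k. norm (g (x k))) ` {..<n})) 0 < r"
    proof (intro exI allI impI)
      fix n assume "Suc k \<le> n"
      hence kin: "k \<in> {..<n}" by simp
      have "Min ((\<lambda>k. norm (g (x k))) ` {..<n}) \<le> norm (g (x k))"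
        using kin by (intro Min_le) auto
      moreover have "Min ((\<lambda>k. norm (g (x k))) ` {..<n}) \<ge> 0"
        using kin by (subst Min_ge_iff) auto
      ultimately show "dist (Min ((\<lambda>k. norm (g (x k))) ` {..<n})) 0 < r"
        using k by (simp add: G_def dist_real_def)
    qed
  qed
  show ?thesis using li lm by blast
qed

end
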